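(* Let $n\ge 1$, $L>0$, and let $f:[0,1]^n\to\mathbb{R}$ satisfy $|f(x)-f(y)|\le L\|x-y\|$ for all $x,y\in[0,1]^n$. Run the algorithm described in the context on $f$, producing queried centers $x_t$, edge vectors $v_t$ and values $f_t=f(P(x_t))$. Then for every $t\ge 2$, $$f_t-\min_{x\in[0,1]^n}f(x)\le (1+\theta)L\|v_t\|,$$ where $\theta=2^{1/n}$.
   Context: Notation: $\|\cdot\|$ is the Euclidean norm; $\Omega=[0,1]^n$; $\theta=2^{1/n}$; $P:\mathbb{R}^n\to\Omega$ is the Euclidean projection onto $\Omega$ (coordinatewise clipping to $[0,1]$); $e_i$ is the $i$-th standard basis vector and $v(i)$ the $i$-th coordinate of $v$. For a center $x\in\mathbb{R}^n$ and edge vector $v\in(0,\infty)^n$, $H(x,v)=\prod_{i=1}^n[x(i)-v(i),\,x(i)+v(i)]$. The algorithm maintains a list of candidates, each a triple (center $x$, edge vector $v$, score $s$). Splitting rule: given an evaluated point $x_a$ with edge vector $v_a$ and value $f_a$, let $I$ be an index maximizing $v_a(i)$ over $i\in\{1,\dots,n\}$ (ties broken by smallest index), let $z=\tfrac{v_a(I)}{2}e_I$, and add to the list the two candidates $(x_a+z,\ v_a-z,\ f_a-L\|v_a\|)$ and $(x_a-z,\ v_a-z,\ f_a-L\|v_a\|)$. Initialization: $x_1=v_1=(\theta^{-1},\theta^{-2},\dots,\theta^{-n})$, $f_1=f(P(x_1))$, and apply the splitting rule to $(x_1,v_1,f_1)$. For each $t\ge 2$: remove from the list a candidate with the smallest score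 (ties arbitrary), call its center $x_t$ and edge vector $v_t$, evaluate $f_t=f(P(x_t))$, and apply the splitting rule to $(x_t,v_t,f_t)$. *)

theory Defs
  imports "HOL-Analysis.Analysis" "HOL-Library.Multiset"
begin

text \<open>Vectors in R^n are represented as functions nat => real; coordinate i
 of the paper (1 <= i <= n) is stored at index i - 1, i.e. indices 0..n-1.
 Points of [0,1]^n have all coordinates with index >= n equal to 0.\<close>

type_synonym vec = "nat \<Rightarrow> real"
type_synonym cand = "vec \<times> vec \<times> real"

definition vnorm :: "nat \<Rightarrow> vec \<Rightarrow> real" where
  "vnorm n v = sqrt (\<Sum>i<n. (v i)\<^sup>2)"

definition cube :: "nat \<Rightarrow> vec set" where
  "cube n = {x. (\<forall>i<n. 0 \<le> x i \<and> x i \<le> 1) \<and> (\<forall>i\<ge>n. x i = 0)}"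

definition proj :: "nat \<Rightarrow> vec \<Rightarrow> vec" where
  "proj n x = (\<lambda>i. if i < n then min 1 (max 0 (x i)) else 0)"

definition theta :: "nat \<Rightarrow> real" where
  "theta n = 2 powr (1 / real n)"

definition x_init :: "nat \<Rightarrow> vec" where
  "x_init n = (\<lambda>i. if i < n then theta n powr (- real (Suc i)) else 0)"

definition split_index :: "nat \<Rightarrow> vec \<Rightarrow> nat" where
  "split_index n v = (LEAST i. i < n \<and> (\<forall>j<n. v j \<le> v i))"

definition split_cands :: "nat \<Rightarrow> real \<Rightarrow> vec \<Rightarrow> vec \<Rightarrow> real \<Rightarrow> cand multiset" where
  "split_cands n L x v fa =
     (let I = split_index n v;
          z = (\<lambda>i. if i = I then v I / 2 else 0);
          s = fa - L * vnorm n v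
      in {# ((\<lambda>i. x i + z i), (\<lambda>i. v i - z i), s),
            ((\<lambda>i. x i - z i), (\<lambda>i. v i - z i), s) #})"

text \<open>A run of the algorithm: xs t, vs t are the center and edge vector queried
 at iteration t (t >= 1), C t is the candidate list after iteration t.\<close>
definition is_run :: "nat \<Rightarrow> real \<Rightarrow> (vec \<Rightarrow> real) \<Rightarrow> (nat \<Rightarrow> vec) \<Rightarrow> (nat \<Rightarrow> vec)
                       \<Rightarrow> (nat \<Rightarrow> cand multiset) \<Rightarrow> bool" where
  "is_run n L f xs vs C \<longleftrightarrow>
     xs 1 = x_init n \<and> vs 1 = x_init n \<and>
     C 1 = split_cands n L (xs 1) (vs 1) (f (proj n (xs 1))) \<and>
     (\<forall>t\<ge>2. \<exists>s. (xs t, vs t, s) \<in># C (t - 1) \<and>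
               (\<forall>c\<in>#C (t - 1). s \<le> snd (snd c)) \<and>
               C t = C (t - 1) - {# (xs t, vs t, s) #}
                     + split_cands n L (xs t) (vs t) (f (proj n (xs t))))"

end

theory Submission
  imports Defs
begin

definition gg :: "nat \<Rightarrow> nat \<Rightarrow> nat \<Rightarrow> real" where
  "gg n k j = theta n powr (- real (k + j))"
definition shape :: "nat \<Rightarrow> nat \<Rightarrow> vec \<Rightarrow> bool" where
  "shape n k v \<longleftrightarrow> image_mset v (mset_set {..<n}) = image_mset (gg n k) (mset_set {..<n})"
definition inbox :: "nat \<Rightarrow> vec \<Rightarrow> vec \<Rightarrow> vec \<Rightarrow> bool" where
  "inbox n x v y \<longleftrightarrow> (\<forall>i<n. \<bar>y i - x i\<bar> \<le> v i)"

lemma theta_gt1: "n \<ge> 1 \<Longrightarrow> theta n > 1"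
proof -
  assume n: "n \<ge> 1"
  have "(2::real) powr 0 < 2 powr (1 / real n)" using n by (intro powr_less_mono) auto
  then show ?thesis unfolding theta_def by simp
qed

lemma theta_pow: "n \<ge> 1 \<Longrightarrow> theta n powr real n = 2"
  unfolding theta_def by (simp add: powr_powr)

lemma gg_pos: "n \<ge> 1 \<Longrightarrow> gg n k j > 0"
  using theta_gt1 unfolding gg_def by force

lemma gg_shift: "gg n (Suc k) j = gg n k (Suc j)"
  unfolding gg_def by simp

lemma gg_half: "n \<ge> 1 \<Longrightarrow> gg n k n = gg n k 0 / 2"
proof -
  assume n: "n \<ge> 1"
  have "gg n k n = theta n powr (- real k) * theta n powr (- real n)"
    unfolding gg_def by (simp add: powr_add[symmetric])
  also have "theta n powr (- real n) = inverse (theta n powr real n)" by (rule powr_minus)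
  also have "\<dots> = 1/2" using theta_pow[OF n] by simp
  finally show ?thesis unfolding gg_def by simp
qed

lemma gg_scale: "n \<ge> 1 \<Longrightarrow> gg n k j = theta n * gg n (Suc k) j"
proof -
  assume n: "n \<ge> 1"
  have t: "theta n > 0" using theta_gt1[OF n] by simp
  have "theta n * gg n (Suc k) j = theta n powr 1 * theta n powr (- real (Suc k + j))"
    unfolding gg_def using t by simp
  also have "\<dots> = theta n powr (1 + - real (Suc k + j))" by (rule powr_add[symmetric])
  also have "\<dots> = gg n k j" unfolding gg_def by (rule arg_cong[where f="\<lambda>e. theta n powr e"]) simp
  finally show ?thesis by simp
qed

lemma gg_mono: "n \<ge> 1 \<Longrightarrow> j \<le> j' \<Longrightarrow> gg n k j' \<le> gg n k j"
  unfolding gg_def using less_imp_le[OF theta_gt1[of n]] by (intro powr_mono) auto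

lemma M_shift: "add_mset (gg n k 0) (image_mset (gg n (Suc k)) (mset_set {..<m}))
   = add_mset (gg n k m) (image_mset (gg n k) (mset_set {..<m}))"
proof (induction m)
  case 0 then show ?case by simp
next
  case (Suc m)
  have "add_mset (gg n k 0) (image_mset (gg n (Suc k)) (mset_set {..<Suc m}))
      = add_mset (gg n k (Suc m)) (add_mset (gg n k 0) (image_mset (gg n (Suc k)) (mset_set {..<m})))"
    by (simp add: lessThan_Suc gg_shift)
  also have "\<dots> = add_mset (gg n k (Suc m)) (image_mset (gg n k) (mset_set {..<Suc m}))"
    using Suc by (simp add: lessThan_Suc)
  finally show ?case .
qed

lemma vnorm_shape: "shape n k v \<Longrightarrow> vnorm n v = sqrt (\<Sum>j<n. (gg n k j)\<^sup>2)"
proof -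
  assume s: "shape n k v"
  have "(\<Sum>i<n. (v i)\<^sup>2) = sum_mset (image_mset (\<lambda>x. x\<^sup>2) (image_mset v (mset_set {..<n})))"
    by (simp add: sum_unfold_sum_mset image_mset.compositionality o_def)
  also have "\<dots> = (\<Sum>j<n. (gg n k j)\<^sup>2)" using s unfolding shape_def
    by (simp add: sum_unfold_sum_mset image_mset.compositionality o_def)
  finally show ?thesis unfolding vnorm_def by simp
qed

lemma vnorm_shape_succ: "n \<ge> 1 \<Longrightarrow> shape n k v \<Longrightarrow> shape n (Suc k) w \<Longrightarrow> vnorm n v = theta n * vnorm n w"
proof -
  assume n: "n \<ge> 1" and a: "shape n k v" "shape n (Suc k) w"
  have "(\<Sum>j<n. (gg n k j)\<^sup>2) = (theta n)\<^sup>2 * (\<Sum>j<n. (gg n (Suc k) j)\<^sup>2)"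
  proof -
    have "(\<Sum>j<n. (gg n k j)\<^sup>2) = (\<Sum>j<n. (theta n)\<^sup>2 * (gg n (Suc k) j)\<^sup>2)"
    proof (rule sum.cong)
      fix j show "(gg n k j)\<^sup>2 = (theta n)\<^sup>2 * (gg n (Suc k) j)\<^sup>2"
        by (subst gg_scale[OF n]) (rule power_mult_distrib)
    qed simp
    then show ?thesis by (simp only: sum_distrib_left)
  qed
  then have "vnorm n v = sqrt ((theta n)\<^sup>2 * (\<Sum>j<n. (gg n (Suc k) j)\<^sup>2))"
    using vnorm_shape[OF a(1)] by simp
  also have "\<dots> = sqrt ((theta n)\<^sup>2) * sqrt (\<Sum>j<n. (gg n (Suc k) j)\<^sup>2)" by (rule real_sqrt_mult)
  also have "sqrt ((theta n)\<^sup>2) = theta n" using theta_gt1[OF n] by simp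
  finally show ?thesis using vnorm_shape[OF a(2)] by simp
qed

lemma shape_pos: "n \<ge> 1 \<Longrightarrow> shape n k v \<Longrightarrow> i < n \<Longrightarrow> v i > 0"
proof -
  assume n: "n \<ge> 1" and s: "shape n k v" and i: "i < n"
  have "v i \<in># image_mset v (mset_set {..<n})" using i by simp
  then have "v i \<in># image_mset (gg n k) (mset_set {..<n})" using s unfolding shape_def by simp
  then show ?thesis using gg_pos[OF n] by auto
qed

lemma split_index_prop: "n \<ge> 1 \<Longrightarrow> split_index n v < n \<and> (\<forall>j<n. v j \<le> v (split_index n v))"
proof -
  assume n: "n \<ge> 1"
  have fin: "finite (v ` {..<n})" "v ` {..<n} \<noteq> {}" using n by (auto simp: lessThan_empty_iff)
  obtain i where i: "i < n" "v i = Max (v ` {..<n})" using Max_in[OF fin] by auto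
  have "i < n \<and> (\<forall>j<n. v j \<le> v i)" using i fin by auto
  then show ?thesis unfolding split_index_def by (rule LeastI)
qed


lemma vnorm_mono: "(\<And>i. i < n \<Longrightarrow> \<bar>a i\<bar> \<le> b i) \<Longrightarrow> vnorm n a \<le> vnorm n b"
  unfolding vnorm_def
proof (intro real_sqrt_le_mono sum_mono)
  fix i assume h: "\<And>i. i < n \<Longrightarrow> \<bar>a i\<bar> \<le> b i" and "i \<in> {..<n}"
  then have "\<bar>a i\<bar> \<le> b i" by auto
  then have "\<bar>a i\<bar>\<^sup>2 \<le> (b i)\<^sup>2" by (intro power_mono) auto
  then show "(a i)\<^sup>2 \<le> (b i)\<^sup>2" by simp
qed

lemma vnorm_coord: "i < n \<Longrightarrow> \<bar>v i\<bar> \<le> vnorm n v"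
proof -
  assume i: "i < n"
  have "(v i)\<^sup>2 \<le> (\<Sum>j<n. (v j)\<^sup>2)"
    using i by (intro member_le_sum) auto
  then have "sqrt ((v i)\<^sup>2) \<le> vnorm n v" unfolding vnorm_def by (rule real_sqrt_le_mono)
  then show ?thesis by simp
qed

lemma vnorm_single: "0 \<le> c \<Longrightarrow> I < n \<Longrightarrow> vnorm n (\<lambda>i. if i = I then c else 0) = c"
proof -
  assume c: "0 \<le> c" and I: "I < n"
  have "(\<Sum>i<n. (if i = I then c else 0)\<^sup>2) = (\<Sum>i<n. if i = I then c\<^sup>2 else 0)"
    by (intro sum.cong) auto
  also have "\<dots> = c\<^sup>2" using I by simp
  finally show ?thesis unfolding vnorm_def using c by simp
qed

lemma proj_cube: "proj n x \<in> cube n"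
  unfolding proj_def cube_def by auto

lemma proj_lip: "i < n \<Longrightarrow> \<bar>proj n x i - proj n y i\<bar> \<le> \<bar>x i - y i\<bar>"
  unfolding proj_def by (auto simp: min_def max_def abs_if)

lemma proj_lip_cube: "y \<in> cube n \<Longrightarrow> i < n \<Longrightarrow> \<bar>proj n x i - y i\<bar> \<le> \<bar>x i - y i\<bar>"
  unfolding proj_def cube_def by (auto simp: min_def max_def abs_if)

lemma child_shape:
  assumes n: "n \<ge> 1" and s: "shape n k v" and I: "I = split_index n v"
  shows "shape n (Suc k) (\<lambda>i. v i - (if i = I then v I / 2 else 0))"
proof -
  let ?w = "\<lambda>i. v i - (if i = I then v I / 2 else 0)"
  have Ip: "I < n" "\<forall>j<n. v j \<le> v I" using split_index_prop[OF n] I by auto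
  have A: "{..<n} = insert I ({..<n} - {I})" using Ip by auto
  have mA: "mset_set {..<n} = add_mset I (mset_set ({..<n} - {I}))"
    using Ip(1) by (metis finite_lessThan lessThan_iff mset_set.remove)
  define R where "R = image_mset v (mset_set ({..<n} - {I}))"
  have Rw: "image_mset ?w (mset_set ({..<n} - {I})) = R"
    unfolding R_def by (intro image_mset_cong) auto
  have vM: "image_mset v (mset_set {..<n}) = add_mset (v I) R"
    unfolding R_def by (subst mA) simp
  have wM: "image_mset ?w (mset_set {..<n}) = add_mset (v I / 2) R"
    using Rw by (subst mA) simp
  have "v I \<in># image_mset (gg n k) (mset_set {..<n})"
    using s vM unfolding shape_def by (metis union_single_eq_member)
  then obtain j where j: "j < n" "v I = gg n k j" by auto
  have "gg n k 0 \<in># image_mset v (mset_set {..<n})"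
    using s n unfolding shape_def by auto
  then obtain i where i: "i < n" "gg n k 0 = v i" by auto
  have "v I = gg n k 0"
    using j i Ip gg_mono[OF n, of 0 j k] by force
  then have vI: "v I = gg n k 0" .
  have "add_mset (gg n k 0) (image_mset ?w (mset_set {..<n}))
        = add_mset (gg n k n) (image_mset (gg n k) (mset_set {..<n}))"
    using wM vM s gg_half[OF n, of k] vI unfolding shape_def by simp
  also have "\<dots> = add_mset (gg n k 0) (image_mset (gg n (Suc k)) (mset_set {..<n}))"
    by (rule M_shift[symmetric])
  finally show ?thesis unfolding shape_def by simp
qed


definition good :: "nat \<Rightarrow> real \<Rightarrow> (vec \<Rightarrow> real) \<Rightarrow> cand \<Rightarrow> bool" where
  "good n L f c \<longleftrightarrow>
     (\<forall>y\<in>cube n. inbox n (fst c) (fst (snd c)) y \<longrightarrow> snd (snd c) \<le> f y) \<and>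
     f (proj n (fst c)) - snd (snd c) \<le> (1 + theta n) * L * vnorm n (fst (snd c)) \<and>
     (\<exists>k. shape n k (fst (snd c)))"

lemma child_good_gen:
  assumes n: "n \<ge> 1" and L: "L > 0"
    and lip: "\<forall>x\<in>cube n. \<forall>y\<in>cube n. \<bar>f x - f y\<bar> \<le> L * vnorm n (\<lambda>i. x i - y i)"
    and s: "shape n k v" and I: "I = split_index n v"
    and z: "z = (\<lambda>i. if i = I then v I / 2 else 0)"
    and xc: "\<And>i. \<bar>xc i - x i\<bar> = z i"
  shows "good n L f (xc, (\<lambda>i. v i - z i), f (proj n x) - L * vnorm n v)"
proof -
  let ?vc = "\<lambda>i. v i - z i"
  have Ip: "I < n" "\<forall>j<n. v j \<le> v I" using split_index_prop[OF n] I by auto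
  have vpos: "\<And>i. i < n \<Longrightarrow> v i > 0" using shape_pos[OF n s] by auto
  have sc: "shape n (Suc k) ?vc" using child_shape[OF n s I] z by simp
  have box: "inbox n x v y" if "inbox n xc ?vc y" for y
    unfolding inbox_def
  proof (intro allI impI)
    fix i assume i: "i < n"
    have "\<bar>y i - xc i\<bar> \<le> v i - z i" using that i unfolding inbox_def by auto
    then show "\<bar>y i - x i\<bar> \<le> v i" using xc[of i] by linarith
  qed
  have P1: "f (proj n x) - L * vnorm n v \<le> f y" if y: "y \<in> cube n" "inbox n xc ?vc y" for y
  proof -
    have b: "inbox n x v y" using box y(2) by blast
    have "vnorm n (\<lambda>i. proj n x i - y i) \<le> vnorm n v"
    proof (rule vnorm_mono)
      fix i assume i: "i < n"
      show "\<bar>proj n x i - y i\<bar> \<le> v i"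
        using proj_lip_cube[OF y(1) i, of x] b i unfolding inbox_def by (metis abs_minus_commute order_trans)
    qed
    moreover have "\<bar>f (proj n x) - f y\<bar> \<le> L * vnorm n (\<lambda>i. proj n x i - y i)"
      using lip proj_cube y(1) by blast
    ultimately have "\<bar>f (proj n x) - f y\<bar> \<le> L * vnorm n v"
      using L by (meson mult_left_mono less_imp_le order_trans)
    then show ?thesis by linarith
  qed
  have "vnorm n (\<lambda>i. proj n xc i - proj n x i) \<le> vnorm n z"
  proof (rule vnorm_mono)
    fix i assume i: "i < n"
    show "\<bar>proj n xc i - proj n x i\<bar> \<le> z i" using proj_lip[OF i, of xc x] xc[of i] by simp
  qed
  also have "vnorm n z = v I / 2" unfolding z using vnorm_single[of "v I / 2" I n] Ip vpos[OF Ip(1)] by simp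
  also have "\<dots> = ?vc I" using z by simp
  also have "\<dots> \<le> vnorm n ?vc" using vnorm_coord[OF Ip(1), of ?vc] by simp
  finally have d: "vnorm n (\<lambda>i. proj n xc i - proj n x i) \<le> vnorm n ?vc" .
  have "\<bar>f (proj n xc) - f (proj n x)\<bar> \<le> L * vnorm n (\<lambda>i. proj n xc i - proj n x i)"
    using lip proj_cube by blast
  also have "\<dots> \<le> L * vnorm n ?vc" using d L by simp
  finally have e: "\<bar>f (proj n xc) - f (proj n x)\<bar> \<le> L * vnorm n ?vc" .
  have nv: "vnorm n v = theta n * vnorm n ?vc" by (rule vnorm_shape_succ[OF n s sc])
  have P2: "f (proj n xc) - (f (proj n x) - L * vnorm n v) \<le> (1 + theta n) * L * vnorm n ?vc"
    using e nv by (simp add: algebra_simps)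
  show ?thesis unfolding good_def using P1 P2 sc by auto
qed

lemma child_good:
  assumes n: "n \<ge> 1" and L: "L > 0"
    and lip: "\<forall>x\<in>cube n. \<forall>y\<in>cube n. \<bar>f x - f y\<bar> \<le> L * vnorm n (\<lambda>i. x i - y i)"
    and s: "shape n k v"
    and c: "c \<in># split_cands n L x v (f (proj n x))"
  shows "good n L f c"
proof -
  define I where "I = split_index n v"
  define z where "z = (\<lambda>i. if i = I then v I / 2 else 0)"
  have Ip: "I < n" using split_index_prop[OF n] I_def by auto
  have vpos: "v I > 0" using shape_pos[OF n s Ip] .
  have zp: "\<And>i. z i \<ge> 0" unfolding z_def using vpos by auto
  have "c = ((\<lambda>i. x i + z i), (\<lambda>i. v i - z i), f (proj n x) - L * vnorm n v) \<or>
        c = ((\<lambda>i. x i - z i), (\<lambda>i. v i - z i), f (proj n x) - L * vnorm n v)"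
    using c unfolding split_cands_def Let_def I_def z_def by auto
  then show ?thesis
  proof
    assume "c = ((\<lambda>i. x i + z i), (\<lambda>i. v i - z i), f (proj n x) - L * vnorm n v)"
    then show ?thesis using child_good_gen[OF n L lip s I_def z_def, of "\<lambda>i. x i + z i" x] zp by simp
  next
    assume "c = ((\<lambda>i. x i - z i), (\<lambda>i. v i - z i), f (proj n x) - L * vnorm n v)"
    then show ?thesis using child_good_gen[OF n L lip s I_def z_def, of "\<lambda>i. x i - z i" x] zp by simp
  qed
qed

lemma child_cover:
  assumes n: "n \<ge> 1" and s: "shape n k v" and y: "inbox n x v y"
  shows "\<exists>c\<in>#split_cands n L x v fa. inbox n (fst c) (fst (snd c)) y"
proof -
  define I where "I = split_index n v"
  define z where "z = (\<lambda>i. if i = I then v I / 2 else 0)"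
  have Ip: "I < n" using split_index_prop[OF n] I_def by auto
  have SC: "split_cands n L x v fa = {# ((\<lambda>i. x i + z i), (\<lambda>i. v i - z i), fa - L * vnorm n v),
            ((\<lambda>i. x i - z i), (\<lambda>i. v i - z i), fa - L * vnorm n v) #}"
    unfolding split_cands_def Let_def I_def z_def by simp
  have yI: "\<bar>y I - x I\<bar> \<le> v I" using y Ip unfolding inbox_def by auto
  show ?thesis
  proof (cases "y I \<ge> x I")
    case True
    have "inbox n (\<lambda>i. x i + z i) (\<lambda>i. v i - z i) y"
      unfolding inbox_def
    proof (intro allI impI)
      fix i assume i: "i < n"
      show "\<bar>y i - (x i + z i)\<bar> \<le> v i - z i"
      proof (cases "i = I")
        case True then show ?thesis using yI \<open>y I \<ge> x I\<close> unfolding z_def by (simp add: abs_if)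
      next
        case False then show ?thesis using y i unfolding z_def inbox_def by simp
      qed
    qed
    then show ?thesis unfolding SC by auto
  next
    case False
    have "inbox n (\<lambda>i. x i - z i) (\<lambda>i. v i - z i) y"
      unfolding inbox_def
    proof (intro allI impI)
      fix i assume i: "i < n"
      show "\<bar>y i - (x i - z i)\<bar> \<le> v i - z i"
      proof (cases "i = I")
        case True then show ?thesis using yI \<open>\<not> y I \<ge> x I\<close> unfolding z_def by (simp add: abs_if)
      next
        case False then show ?thesis using y i unfolding z_def inbox_def by simp
      qed
    qed
    then show ?thesis unfolding SC by auto
  qed
qed


lemma init_shape: "shape n 1 (x_init n)"
  unfolding shape_def x_init_def gg_def by (intro image_mset_cong) auto

lemma init_cover:
  assumes n: "n \<ge> 1" and y: "y \<in> cube n"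
  shows "inbox n (x_init n) (x_init n) y"
  unfolding inbox_def
proof (intro allI impI)
  fix i assume i: "i < n"
  have a: "x_init n i = gg n 0 (Suc i)" unfolding x_init_def gg_def using i by simp
  have "gg n 0 n \<le> gg n 0 (Suc i)" using gg_mono[OF n, of "Suc i" n 0] i by simp
  moreover have "gg n 0 n = 1/2" using gg_half[OF n, of 0] theta_gt1[OF n] unfolding gg_def by simp
  ultimately have "x_init n i \<ge> 1/2" using a by simp
  moreover have "0 \<le> y i" "y i \<le> 1" using y i unfolding cube_def by auto
  ultimately show "\<bar>y i - x_init n i\<bar> \<le> x_init n i" by (simp add: abs_if)
qed

theorem lemma2:
  fixes n :: nat and L :: real and f :: "vec \<Rightarrow> real"
    and xs vs :: "nat \<Rightarrow> vec" and C :: "nat \<Rightarrow> cand multiset"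
  assumes "n \<ge> 1" and "L > 0"
    and "\<forall>x\<in>cube n. \<forall>y\<in>cube n. \<bar>f x - f y\<bar> \<le> L * vnorm n (\<lambda>i. x i - y i)"
    and "is_run n L f xs vs C"
  shows "\<forall>t\<ge>2. f (proj n (xs t)) - (INF y\<in>cube n. f y) \<le> (1 + theta n) * L * vnorm n (vs t)"
proof -
  note n = assms(1) and L = assms(2) and lip = assms(3) and run = assms(4)[unfolded is_run_def]
  define Inv where "Inv m \<longleftrightarrow> (\<forall>c\<in>#C m. good n L f c) \<and>
      (\<forall>y\<in>cube n. \<exists>c\<in>#C m. inbox n (fst c) (fst (snd c)) y)" for m
  have step: "\<exists>s. (xs t, vs t, s) \<in># C (t - 1) \<and> (\<forall>c\<in>#C (t - 1). s \<le> snd (snd c)) \<and>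
               C t = C (t - 1) - {# (xs t, vs t, s) #}
                     + split_cands n L (xs t) (vs t) (f (proj n (xs t)))" if "t \<ge> 2" for t
    using run that by blast
  have inv: "Inv m" if "m \<ge> 1" for m
    using that
  proof (induction m rule: dec_induct)
    case base
    have C1: "C 1 = split_cands n L (x_init n) (x_init n) (f (proj n (x_init n)))"
      using run by simp
    show ?case unfolding Inv_def C1
      using child_good[OF n L lip init_shape] child_cover[OF n init_shape init_cover[OF n]]
      by blast
  next
    case (step m)
    obtain s where s: "(xs (Suc m), vs (Suc m), s) \<in># C m"
      "C (Suc m) = C m - {# (xs (Suc m), vs (Suc m), s) #}
                     + split_cands n L (xs (Suc m)) (vs (Suc m)) (f (proj n (xs (Suc m))))"
      using step.hyps(1) \<open>\<And>t. t \<ge> 2 \<Longrightarrow> _\<close>[of "Suc m"] by auto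
    let ?sel = "(xs (Suc m), vs (Suc m), s)"
    have gs: "good n L f ?sel" using step.IH s(1) unfolding Inv_def by blast
    then obtain k where k: "shape n k (vs (Suc m))" unfolding good_def by auto
    have G: "\<forall>c\<in>#C (Suc m). good n L f c"
    proof
      fix c assume "c \<in># C (Suc m)"
      then have "c \<in># C m - {#?sel#} \<or> c \<in># split_cands n L (xs (Suc m)) (vs (Suc m)) (f (proj n (xs (Suc m))))"
        using s(2) by simp
      then show "good n L f c"
        using step.IH child_good[OF n L lip k, of c "xs (Suc m)"] unfolding Inv_def by (auto dest: in_diffD)
    qed
    have V: "\<exists>c\<in>#C (Suc m). inbox n (fst c) (fst (snd c)) y" if y: "y \<in> cube n" for y
    proof -
      obtain c where c: "c \<in># C m" "inbox n (fst c) (fst (snd c)) y"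
        using step.IH y unfolding Inv_def by blast
      show ?thesis
      proof (cases "c = ?sel")
        case True
        then have "inbox n (xs (Suc m)) (vs (Suc m)) y" using c by simp
        then obtain d where d: "d \<in># split_cands n L (xs (Suc m)) (vs (Suc m)) (f (proj n (xs (Suc m))))"
          "inbox n (fst d) (fst (snd d)) y"
          using child_cover[OF n k, of "xs (Suc m)" y L "f (proj n (xs (Suc m)))"] by blast
        have "d \<in># C (Suc m)" unfolding s(2) using d(1) by (simp only: union_iff) blast
        then show ?thesis using d(2) by blast
      next
        case False
        then have "c \<in># C m - {#?sel#}" using c(1) by (simp add: in_diff_count count_eq_zero_iff[symmetric] del: count_eq_zero_iff)
        then have "c \<in># C (Suc m)" unfolding s(2) by (simp only: union_iff) blast
        then show ?thesis using c(2) by blast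
      qed
    qed
    show ?case unfolding Inv_def using G V by blast
  qed
  show ?thesis
  proof (intro allI impI)
    fix t :: nat assume t: "t \<ge> 2"
    obtain s where s: "(xs t, vs t, s) \<in># C (t - 1)" "\<forall>c\<in>#C (t - 1). s \<le> snd (snd c)"
      using step[OF t] by blast
    have I: "Inv (t - 1)" using inv t by simp
    have gs: "good n L f (xs t, vs t, s)" using I s(1) unfolding Inv_def by blast
    have lb: "s \<le> f y" if y: "y \<in> cube n" for y
    proof -
      obtain c where c: "c \<in># C (t - 1)" "inbox n (fst c) (fst (snd c)) y"
        using I y unfolding Inv_def by blast
      have "s \<le> snd (snd c)" using s(2) c(1) by blast
      also have "\<dots> \<le> f y" using I c y unfolding Inv_def good_def by blast
      finally show ?thesis .
    qed
    have ne: "cube n \<noteq> {}" using proj_cube by blast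
    have "s \<le> (INF y\<in>cube n. f y)" using lb ne by (intro cINF_greatest) auto
    then show "f (proj n (xs t)) - (INF y\<in>cube n. f y) \<le> (1 + theta n) * L * vnorm n (vs t)"
      using gs unfolding good_def by simp
  qed
qed

end
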